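(* Let $X \subset \mathbb{R}^n$ be finite with at least $k+1$ points. Let $(s,[x])$ and $(t,[y])$ be elements of $\Gamma_{k}(X)$, and let $(s_{0},[x_{0}])$ and $(t_{0},[y_{0}])$ be the maximal branch points below $(s,[x])$ and $(t,[y])$, respectively. Then $(s_{0},[x_{0}]) \cup (t_{0},[y_{0}])$ is the maximal branch point below $(s,[x]) \cup (t,[y])$.
   Context: $\mathbb{R}^n$ has Euclidean metric $d$. For $s\ge 0$, $V_s(X)$ is the Vietoris–Rips complex (vertex set $X$, simplices nonempty subsets with pairwise distances $\le s$), and for an integer $k\ge 0$, $L_{s,k}(X)$ is the full subcomplex of $V_s(X)$ on the vertices $x$ having at least $k$ points $x'\ne x$ of $X$ with $d(x,x')\le s$. $\Gamma_{k}(X)$ is the poset whose elements are pairs $(s,[x])$ with $s \in \mathbb{R}_{\geq 0}$ and $[x] \in \pi_{0}L_{s,k}(X)$, with $(s,[x]) \leq (t,[y])$ iff $s \leq t$ and the function $\pi_{0}L_{s,k}(X) \to \pi_{0}L_{t,k}(X)$ induced by inclusion sends $[x]$ to $[y]$. $\cup$ denotes least upper bound (join) in $\Gamma_k(X)$, which exists for any two elements. An element $(t,[x])$ of $\Gamma_{k}(X)$ is a branch point if either (1) there is $s_{0} < t$ such that for all $s$ with $s_{0} \leq s < t$ there are two distinct elements $(s,[x_{0}]) \neq (s,[x_{1}])$ with $(s,[x_{0}]) \leq (t,[x])$ and $(s,[x_{1}]) \leq (t,[x])$; or (2) there is no element $(s,[y])$ with $s<t$ and $(s,[y]) \leq (t,[x])$.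 The maximal branch point below an element $p$ is the (unique) branch point $b \le p$ such that every branch point $b' \le p$ satisfies $b' \le b$. *)

theory Defs
  imports "HOL-Analysis.Analysis"
begin


definition VR :: "real \<Rightarrow> (real ^ ('n::finite)) set \<Rightarrow> (real ^ ('n::finite)) set set" where
  "VR s X = {\<sigma>. \<sigma> \<noteq> {} \<and> finite \<sigma> \<and> \<sigma> \<subseteq> X \<and> (\<forall>a\<in>\<sigma>. \<forall>b\<in>\<sigma>. dist a b \<le> s)}"

definition Lverts :: "real \<Rightarrow> nat \<Rightarrow> (real ^ ('n::finite)) set \<Rightarrow> (real ^ ('n::finite)) set" where
  "Lverts s k X = {x\<in>X. card {x'\<in>X. x' \<noteq> x \<and> dist x x' \<le> s} \<ge> k}"

definition Lcx :: "real \<Rightarrow> nat \<Rightarrow> (real ^ ('n::finite)) set \<Rightarrow> (real ^ ('n::finite)) set set" where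
  "Lcx s k X = {\<sigma>\<in>VR s X. \<sigma> \<subseteq> Lverts s k X}"

definition cx_verts :: "'a set set \<Rightarrow> 'a set" where
  "cx_verts K = \<Union>K"

definition cx_adj :: "'a set set \<Rightarrow> ('a \<times> 'a) set" where
  "cx_adj K = {(a,b). \<exists>\<sigma>\<in>K. a \<in> \<sigma> \<and> b \<in> \<sigma>}"

definition cx_comp :: "'a set set \<Rightarrow> 'a \<Rightarrow> 'a set" where
  "cx_comp K x = {y. (x,y) \<in> (cx_adj K)\<^sup>*}"

definition pi0 :: "'a set set \<Rightarrow> 'a set set" where
  "pi0 K = cx_comp K ` cx_verts K"

definition Gamma :: "nat \<Rightarrow> (real ^ ('n::finite)) set \<Rightarrow> (real \<times> (real ^ ('n::finite)) set) set" where
  "Gamma k X = {(s,C). s \<ge> 0 \<and> C \<in> pi0 (Lcx s k X)}"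

text \<open>(s,C) \<le> (t,D) iff s \<le> t and the map pi_0 L_s \<rightarrow> pi_0 L_t induced by inclusion sends C to D
  (i.e. the component in L_t of a representative of C is D).\<close>
definition gle :: "nat \<Rightarrow> (real ^ ('n::finite)) set \<Rightarrow> real \<times> (real ^ ('n::finite)) set \<Rightarrow> real \<times> (real ^ ('n::finite)) set \<Rightarrow> bool" where
  "gle k X p q \<longleftrightarrow> p \<in> Gamma k X \<and> q \<in> Gamma k X \<and> fst p \<le> fst q \<and>
     (\<forall>x\<in>snd p. cx_comp (Lcx (fst q) k X) x = snd q)"

definition is_lub :: "nat \<Rightarrow> (real ^ ('n::finite)) set \<Rightarrow> real \<times> (real ^ ('n::finite)) set \<Rightarrow> real \<times> (real ^ ('n::finite)) set \<Rightarrow> real \<times> (real ^ ('n::finite)) set \<Rightarrow> bool" where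
  "is_lub k X p q r \<longleftrightarrow> gle k X p r \<and> gle k X q r \<and>
     (\<forall>u. gle k X p u \<and> gle k X q u \<longrightarrow> gle k X r u)"

definition gjoin :: "nat \<Rightarrow> (real ^ ('n::finite)) set \<Rightarrow> real \<times> (real ^ ('n::finite)) set \<Rightarrow> real \<times> (real ^ ('n::finite)) set \<Rightarrow> real \<times> (real ^ ('n::finite)) set" where
  "gjoin k X p q = (THE r. is_lub k X p q r)"

definition branch_point :: "nat \<Rightarrow> (real ^ ('n::finite)) set \<Rightarrow> real \<times> (real ^ ('n::finite)) set \<Rightarrow> bool" where
  "branch_point k X p \<longleftrightarrow> p \<in> Gamma k X \<and>
     ((\<exists>s0 < fst p. \<forall>s. s0 \<le> s \<and> s < fst p \<longrightarrow>
         (\<exists>C0 C1. C0 \<noteq> C1 \<and> gle k X (s,C0) p \<and> gle k X (s,C1) p))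
      \<or> \<not> (\<exists>q. fst q < fst p \<and> gle k X q p))"

definition max_branch_below :: "nat \<Rightarrow> (real ^ ('n::finite)) set \<Rightarrow> real \<times> (real ^ ('n::finite)) set \<Rightarrow> real \<times> (real ^ ('n::finite)) set \<Rightarrow> bool" where
  "max_branch_below k X b p \<longleftrightarrow> branch_point k X b \<and> gle k X b p \<and>
     (\<forall>b'. branch_point k X b' \<and> gle k X b' p \<longrightarrow> gle k X b' b)"

end

theory Submission imports Defs begin

lemma adj_sym_rel: "sym (cx_adj K)"
  unfolding sym_def cx_adj_def by blast

lemma rt_sym: "(a,b) \<in> (cx_adj K)\<^sup>* \<Longrightarrow> (b,a) \<in> (cx_adj K)\<^sup>*"
  by (rule symD[OF sym_rtrancl[OF adj_sym_rel]])

lemma comp_eq_iff: "cx_comp K a = cx_comp K b \<longleftrightarrow> (a,b) \<in> (cx_adj K)\<^sup>*"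
proof
  assume "cx_comp K a = cx_comp K b"
  moreover have "b \<in> cx_comp K b" unfolding cx_comp_def by simp
  ultimately show "(a,b) \<in> (cx_adj K)\<^sup>*" unfolding cx_comp_def by blast
next
  assume h: "(a,b) \<in> (cx_adj K)\<^sup>*"
  then have h': "(b,a) \<in> (cx_adj K)\<^sup>*" by (rule rt_sym)
  show "cx_comp K a = cx_comp K b"
  proof (rule set_eqI)
    fix z
    show "z \<in> cx_comp K a \<longleftrightarrow> z \<in> cx_comp K b"
      unfolding cx_comp_def mem_Collect_eq using rtrancl_trans[OF h] rtrancl_trans[OF h'] by blast
  qed
qed

lemma adj_verts: "(a,b) \<in> cx_adj K \<Longrightarrow> b \<in> cx_verts K"
  unfolding cx_adj_def cx_verts_def by blast

lemma comp_sub_verts: "a \<in> cx_verts K \<Longrightarrow> cx_comp K a \<subseteq> cx_verts K"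
proof
  fix b assume a: "a \<in> cx_verts K" and "b \<in> cx_comp K a"
  then have "(a,b) \<in> (cx_adj K)\<^sup>*" unfolding cx_comp_def by simp
  then show "b \<in> cx_verts K"
    by (induction rule: rtrancl_induct) (use a adj_verts in auto)
qed

lemma comp_self: "a \<in> cx_comp K a" unfolding cx_comp_def by simp

context
  fixes k :: nat and X :: "(real ^ ('n::finite)) set"
  assumes fin: "finite X"
begin

lemma Lverts_mono: "r \<le> r' \<Longrightarrow> Lverts r k X \<subseteq> Lverts r' k X"
proof
  fix x assume r: "r \<le> r'" and x: "x \<in> Lverts r k X"
  have "card {x'\<in>X. x' \<noteq> x \<and> dist x x' \<le> r} \<le> card {x'\<in>X. x' \<noteq> x \<and> dist x x' \<le> r'}"
    by (rule card_mono) (use fin r in auto)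
  then show "x \<in> Lverts r' k X" using x unfolding Lverts_def by auto
qed

lemma Lcx_mono: "r \<le> r' \<Longrightarrow> Lcx r k X \<subseteq> Lcx r' k X"
proof
  fix \<sigma> assume r: "r \<le> r'" and s: "\<sigma> \<in> Lcx r k X"
  have a: "\<sigma> \<noteq> {}" "finite \<sigma>" "\<sigma> \<subseteq> X" "\<sigma> \<subseteq> Lverts r k X"
    and b: "\<forall>a\<in>\<sigma>. \<forall>b\<in>\<sigma>. dist a b \<le> r" using s unfolding Lcx_def VR_def by auto
  have "\<forall>a\<in>\<sigma>. \<forall>b\<in>\<sigma>. dist a b \<le> r'" using b r by force
  moreover have "\<sigma> \<subseteq> Lverts r' k X" using a(4) Lverts_mono[OF r] by (rule subset_trans)
  ultimately show "\<sigma> \<in> Lcx r' k X" using a unfolding Lcx_def VR_def by blast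
qed

lemma rt_mono: "r \<le> r' \<Longrightarrow> (cx_adj (Lcx r k X))\<^sup>* \<subseteq> (cx_adj (Lcx r' k X))\<^sup>*"
  apply (rule rtrancl_mono)
  using Lcx_mono unfolding cx_adj_def by blast

lemma Lverts_sub: "Lverts r k X \<subseteq> X" unfolding Lverts_def by auto

lemma verts_Lcx: "0 \<le> r \<Longrightarrow> cx_verts (Lcx r k X) = Lverts r k X"
proof
  show "cx_verts (Lcx r k X) \<subseteq> Lverts r k X" unfolding cx_verts_def Lcx_def by auto
next
  assume "0 \<le> r"
  show "Lverts r k X \<subseteq> cx_verts (Lcx r k X)"
  proof
    fix x assume x: "x \<in> Lverts r k X"
    then have "{x} \<in> Lcx r k X" using \<open>0 \<le> r\<close> Lverts_sub unfolding Lcx_def VR_def by auto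
    then show "x \<in> cx_verts (Lcx r k X)" unfolding cx_verts_def by auto
  qed
qed

lemma Gamma_iff: "p \<in> Gamma k X \<longleftrightarrow> fst p \<ge> 0 \<and> snd p \<in> pi0 (Lcx (fst p) k X)"
  by (cases p) (simp add: Gamma_def)

lemma Gamma_rep:
  assumes "p \<in> Gamma k X" "x \<in> snd p"
  shows "snd p = cx_comp (Lcx (fst p) k X) x" "x \<in> Lverts (fst p) k X" "fst p \<ge> 0"
proof -
  have f: "fst p \<ge> 0" and "snd p \<in> pi0 (Lcx (fst p) k X)" using assms Gamma_iff by auto
  then obtain v where v: "v \<in> cx_verts (Lcx (fst p) k X)" and C: "snd p = cx_comp (Lcx (fst p) k X) v"
    unfolding pi0_def by auto
  then have "(v,x) \<in> (cx_adj (Lcx (fst p) k X))\<^sup>*" using assms(2) unfolding cx_comp_def by auto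
  then show "snd p = cx_comp (Lcx (fst p) k X) x" using C comp_eq_iff by metis
  show "x \<in> Lverts (fst p) k X" using comp_sub_verts[OF v] C assms(2) verts_Lcx[OF f] by auto
  show "fst p \<ge> 0" by (rule f)
qed

lemma Gamma_ne: "p \<in> Gamma k X \<Longrightarrow> \<exists>x. x \<in> snd p"
proof -
  assume "p \<in> Gamma k X"
  then obtain v where "snd p = cx_comp (Lcx (fst p) k X) v" unfolding Gamma_iff pi0_def by blast
  then have "v \<in> snd p" using comp_self by metis
  then show ?thesis by blast
qed

lemma Gamma_img:
  assumes "p \<in> Gamma k X" "x \<in> snd p" "fst p \<le> t"
  shows "(t, cx_comp (Lcx t k X) x) \<in> Gamma k X"
proof -
  have "x \<in> Lverts t k X" using Gamma_rep[OF assms(1,2)] Lverts_mono assms(3) by blast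
  moreover have "t \<ge> 0" using Gamma_rep[OF assms(1,2)] assms(3) by linarith
  ultimately show ?thesis unfolding Gamma_iff pi0_def using verts_Lcx by auto
qed

lemma comp_lift:
  assumes "p \<in> Gamma k X" "x \<in> snd p" "z \<in> snd p" "fst p \<le> t"
  shows "cx_comp (Lcx t k X) z = cx_comp (Lcx t k X) x"
proof -
  have "(x,z) \<in> (cx_adj (Lcx (fst p) k X))\<^sup>*"
    using Gamma_rep(1)[OF assms(1,2)] assms(3) unfolding cx_comp_def by auto
  then have "(x,z) \<in> (cx_adj (Lcx t k X))\<^sup>*" using rt_mono[OF assms(4)] by auto
  then show ?thesis using comp_eq_iff by metis
qed

lemma gle_iff:
  assumes "p \<in> Gamma k X" "q \<in> Gamma k X" "x \<in> snd p"
  shows "gle k X p q \<longleftrightarrow> fst p \<le> fst q \<and> snd q = cx_comp (Lcx (fst q) k X) x"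
  unfolding gle_def using assms comp_lift by metis

lemma gle_refl: "p \<in> Gamma k X \<Longrightarrow> gle k X p p"
proof -
  assume G: "p \<in> Gamma k X"
  obtain x where x: "x \<in> snd p" using Gamma_ne[OF G] by (elim exE)
  have "fst p \<le> fst p \<and> snd p = cx_comp (Lcx (fst p) k X) x" using Gamma_rep(1)[OF G x] by simp
  then show ?thesis using gle_iff[OF G G x] by blast
qed

lemma gle_G: "gle k X p q \<Longrightarrow> p \<in> Gamma k X \<and> q \<in> Gamma k X"
  unfolding gle_def by auto

lemma gle_trans: "gle k X p q \<Longrightarrow> gle k X q r \<Longrightarrow> gle k X p r"
proof -
  assume a: "gle k X p q" "gle k X q r"
  then have G: "p \<in> Gamma k X" "q \<in> Gamma k X" "r \<in> Gamma k X" using gle_G by auto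
  obtain x where x: "x \<in> snd p" using Gamma_ne[OF G(1)] by (elim exE)
  have 1: "fst p \<le> fst q \<and> snd q = cx_comp (Lcx (fst q) k X) x" using iffD1[OF gle_iff[OF G(1) G(2) x] a(1)] .
  then have xq: "x \<in> snd q" using comp_self by metis
  have 2: "fst q \<le> fst r \<and> snd r = cx_comp (Lcx (fst r) k X) x" using iffD1[OF gle_iff[OF G(2) G(3) xq] a(2)] .
  have "fst p \<le> fst r \<and> snd r = cx_comp (Lcx (fst r) k X) x" using 1 2 by linarith
  then show ?thesis using iffD2[OF gle_iff[OF G(1) G(3) x]] by blast
qed

lemma gle_antisym: "gle k X p q \<Longrightarrow> gle k X q p \<Longrightarrow> p = q"
proof -
  assume a: "gle k X p q" "gle k X q p"
  then have G: "p \<in> Gamma k X" "q \<in> Gamma k X" using gle_G by auto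
  obtain x where x: "x \<in> snd p" using Gamma_ne[OF G(1)] by (elim exE)
  have 1: "fst p \<le> fst q \<and> snd q = cx_comp (Lcx (fst q) k X) x" using iffD1[OF gle_iff[OF G(1) G(2) x] a(1)] .
  have "fst q \<le> fst p" using a(2) unfolding gle_def by blast
  then have e: "fst p = fst q" using 1 by linarith
  moreover have "snd p = cx_comp (Lcx (fst p) k X) x" using Gamma_rep(1)[OF G(1) x] .
  ultimately show ?thesis using 1 by (simp add: prod_eq_iff)
qed

lemma gle_chain:
  assumes "gle k X a p" "gle k X a q" "fst p \<le> fst q"
  shows "gle k X p q"
proof -
  have G: "a \<in> Gamma k X" "p \<in> Gamma k X" "q \<in> Gamma k X" using gle_G assms by auto
  obtain x where x: "x \<in> snd a" using Gamma_ne[OF G(1)] by (elim exE)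
  have 1: "snd p = cx_comp (Lcx (fst p) k X) x" using iffD1[OF gle_iff[OF G(1) G(2) x] assms(1)] by blast
  have 2: "snd q = cx_comp (Lcx (fst q) k X) x" using iffD1[OF gle_iff[OF G(1) G(3) x] assms(2)] by blast
  have xp: "x \<in> snd p" using 1 comp_self by metis
  show ?thesis using iffD2[OF gle_iff[OF G(2) G(3) xp]] assms(3) 2 by blast
qed

lemma gle_up:
  assumes "p \<in> Gamma k X" "fst p \<le> t"
  shows "\<exists>C. gle k X p (t, C)"
proof -
  obtain x where x: "x \<in> snd p" using Gamma_ne[OF assms(1)] by (elim exE)
  have G2: "(t, cx_comp (Lcx t k X) x) \<in> Gamma k X" using Gamma_img[OF assms(1) x assms(2)] .
  have "gle k X p (t, cx_comp (Lcx t k X) x)"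
    using iffD2[OF gle_iff[OF assms(1) G2 x]] assms(2) by simp
  then show ?thesis by blast
qed

lemma lub_unique: "is_lub k X p q r \<Longrightarrow> gjoin k X p q = r"
  unfolding gjoin_def
proof (rule the_equality)
  assume "is_lub k X p q r"
  then show "is_lub k X p q r" .
  fix r' assume a: "is_lub k X p q r" and b: "is_lub k X p q r'"
  have "gle k X r r'" using a b unfolding is_lub_def by blast
  moreover have "gle k X r' r" using a b unfolding is_lub_def by blast
  ultimately show "r' = r" using gle_antisym by blast
qed

lemma L_eq:
  assumes "r' \<le> r" "\<forall>a\<in>X. \<forall>b\<in>X. dist a b \<le> r \<longrightarrow> dist a b \<le> r'"
  shows "Lcx r k X = Lcx r' k X"
proof -
  have e: "\<And>a b. a \<in> X \<Longrightarrow> b \<in> X \<Longrightarrow> dist a b \<le> r \<longleftrightarrow> dist a b \<le> r'"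
    using assms by force
  have "\<And>x. x \<in> X \<Longrightarrow> {x'\<in>X. x' \<noteq> x \<and> dist x x' \<le> r} = {x'\<in>X. x' \<noteq> x \<and> dist x x' \<le> r'}"
    using e by blast
  then have LV: "Lverts r k X = Lverts r' k X" unfolding Lverts_def by auto
  have "VR r X = VR r' X" unfolding VR_def using e by (auto simp: subset_iff)
  then show ?thesis unfolding Lcx_def LV by simp
qed

lemma lub_exists:
  assumes cardX: "card X \<ge> k + 1" and G: "p \<in> Gamma k X" "q \<in> Gamma k X"
  shows "\<exists>r. is_lub k X p q r"
proof -
  obtain x where x: "x \<in> snd p" using Gamma_ne G by blast
  obtain y where y: "y \<in> snd q" using Gamma_ne G by blast
  have xX: "x \<in> X" using Gamma_rep(2)[OF G(1) x] Lverts_sub by blast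
  have yX: "y \<in> X" using Gamma_rep(2)[OF G(2) y] Lverts_sub by blast
  define m where "m = max (fst p) (fst q)"
  define D where "D = (\<lambda>(a,b). dist a b) ` (X \<times> X)"
  have finD: "finite D" unfolding D_def using fin by simp
  define P where "P r \<longleftrightarrow> m \<le> r \<and> cx_comp (Lcx r k X) x = cx_comp (Lcx r k X) y" for r
  define g where "g r = Max (insert m {d\<in>D. d \<le> r})" for r
  have g: "g r \<le> r \<and> m \<le> g r \<and> g r \<in> insert m D \<and> Lcx (g r) k X = Lcx r k X" if "m \<le> r" for r
  proof -
    have fs: "finite (insert m {d\<in>D. d \<le> r})" using finD by simp
    have 1: "g r \<le> r" unfolding g_def using fs that by (subst Max_le_iff) auto
    have 2: "m \<le> g r" unfolding g_def using fs by (rule Max_ge) simp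
    have 3: "g r \<in> insert m D" unfolding g_def using fs Max_in[OF fs] by blast
    have "\<forall>a\<in>X. \<forall>b\<in>X. dist a b \<le> r \<longrightarrow> dist a b \<le> g r"
    proof (intro ballI impI)
      fix a b assume "a \<in> X" "b \<in> X" "dist a b \<le> r"
      then have "dist a b \<in> insert m {d\<in>D. d \<le> r}" unfolding D_def by force
      then show "dist a b \<le> g r" unfolding g_def using fs by (rule Max_ge[rotated])
    qed
    then have "Lcx r k X = Lcx (g r) k X" using L_eq 1 by blast
    then show ?thesis using 1 2 3 by simp
  qed
  define R where "R = max m (Max D)"
  have DR: "\<And>a b. a \<in> X \<Longrightarrow> b \<in> X \<Longrightarrow> dist a b \<le> R"
  proof -
    fix a b assume "a \<in> X" "b \<in> X"
    then have "dist a b \<in> D" unfolding D_def by force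
    then have "dist a b \<le> Max D" using finD by simp
    then show "dist a b \<le> R" unfolding R_def by simp
  qed
  have LVR: "Lverts R k X = X"
  proof
    show "Lverts R k X \<subseteq> X" by (rule Lverts_sub)
    show "X \<subseteq> Lverts R k X"
    proof
      fix z assume z: "z \<in> X"
      have "{x'\<in>X. x' \<noteq> z \<and> dist z x' \<le> R} = X - {z}" using DR z by auto
      moreover have "card (X - {z}) \<ge> k" using cardX z fin by simp
      ultimately show "z \<in> Lverts R k X" unfolding Lverts_def using z by simp
    qed
  qed
  have R0: "0 \<le> R" using DR[OF xX xX] by simp
  have "{x,y} \<in> Lcx R k X" unfolding Lcx_def VR_def LVR using xX yX DR R0 by auto
  then have "(x,y) \<in> cx_adj (Lcx R k X)" unfolding cx_adj_def by blast
  then have PR: "P R" unfolding P_def R_def using comp_eq_iff by (metis max.cobounded1 r_into_rtrancl R_def)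
  have PgR: "P (g R)" using PR g[of R] unfolding P_def by auto
  define F where "F = {r \<in> insert m D. P r}"
  have finF: "finite F" unfolding F_def using finD by simp
  have gRF: "g R \<in> F" unfolding F_def using PgR g[of R] PR P_def by auto
  define r0 where "r0 = Min F"
  have r0F: "r0 \<in> F" unfolding r0_def using finF gRF Min_in by blast
  then have Pr0: "P r0" unfolding F_def by simp
  have r0min: "r0 \<le> r" if "P r" for r
  proof -
    have "P (g r)" using that g[of r] unfolding P_def by auto
    then have "g r \<in> F" unfolding F_def using g[of r] that P_def by auto
    then have "r0 \<le> g r" unfolding r0_def using finF by simp
    then show ?thesis using g[of r] that P_def by auto
  qed
  define rr where "rr = (r0, cx_comp (Lcx r0 k X) x)"
  have m0: "fst p \<le> r0" "fst q \<le> r0" using Pr0 unfolding P_def m_def by auto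
  have rrG: "rr \<in> Gamma k X" unfolding rr_def using Gamma_img[OF G(1) x m0(1)] .
  have 1: "gle k X p rr" using gle_iff[OF G(1) rrG x] m0 unfolding rr_def by simp
  have 2: "gle k X q rr" using gle_iff[OF G(2) rrG y] m0 Pr0 unfolding rr_def P_def by simp
  have 3: "gle k X rr u" if "gle k X p u" "gle k X q u" for u
  proof -
    have uG: "u \<in> Gamma k X" using that gle_G by blast
    have a: "fst p \<le> fst u" "snd u = cx_comp (Lcx (fst u) k X) x" using gle_iff[OF G(1) uG x] that by auto
    have b: "fst q \<le> fst u" "snd u = cx_comp (Lcx (fst u) k X) y" using gle_iff[OF G(2) uG y] that by auto
    have "P (fst u)" unfolding P_def m_def using a b by auto
    then have "r0 \<le> fst u" by (rule r0min)
    moreover have "x \<in> snd rr" unfolding rr_def using comp_self by simp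
    ultimately show ?thesis using gle_iff[OF rrG uG] a unfolding rr_def by simp
  qed
  show ?thesis unfolding is_lub_def using 1 2 3 by blast
qed

end

theorem lemma12:
  fixes X :: "(real ^ ('n::finite)) set" and k :: nat
    and p q b1 b2 :: "real \<times> (real ^ ('n::finite)) set"
  assumes "finite X" and "card X \<ge> k + 1"
    and "p \<in> Gamma k X" and "q \<in> Gamma k X"
    and "max_branch_below k X b1 p" and "max_branch_below k X b2 q"
  shows "max_branch_below k X (gjoin k X b1 b2) (gjoin k X p q)"
proof -
  note fin = assms(1)
  note refl = gle_refl[OF fin] and trans = gle_trans[OF fin] and anti = gle_antisym[OF fin]
    and chain = gle_chain[OF fin] and lubu = lub_unique[OF fin] and GG = gle_G[OF fin]
  have b1: "branch_point k X b1" "gle k X b1 p" "\<And>b'. branch_point k X b' \<Longrightarrow> gle k X b' p \<Longrightarrow> gle k X b' b1"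
    using assms(5) unfolding max_branch_below_def by auto
  have b2: "branch_point k X b2" "gle k X b2 q" "\<And>b'. branch_point k X b' \<Longrightarrow> gle k X b' q \<Longrightarrow> gle k X b' b2"
    using assms(6) unfolding max_branch_below_def by auto
  have G: "b1 \<in> Gamma k X" "b2 \<in> Gamma k X" using b1 b2 GG by auto
  show ?thesis
  proof (cases "gle k X p q")
    case True
    have "is_lub k X p q q" unfolding is_lub_def using True refl[OF assms(4)] by blast
    then have j: "gjoin k X p q = q" by (rule lubu)
    have "gle k X b1 b2" using b2(3)[OF b1(1)] trans[OF b1(2) True] by blast
    then have "is_lub k X b1 b2 b2" unfolding is_lub_def using refl[OF G(2)] by blast
    then have "gjoin k X b1 b2 = b2" by (rule lubu)
    then show ?thesis using j assms(6) by simp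
  next
    case F1: False
    show ?thesis
    proof (cases "gle k X q p")
      case True
      have "is_lub k X p q p" unfolding is_lub_def using True refl[OF assms(3)] by blast
      then have j: "gjoin k X p q = p" by (rule lubu)
      have "gle k X b2 b1" using b1(3)[OF b2(1)] trans[OF b2(2) True] by blast
      then have "is_lub k X b1 b2 b1" unfolding is_lub_def using refl[OF G(1)] by blast
      then have "gjoin k X b1 b2 = b1" by (rule lubu)
      then show ?thesis using j assms(5) by simp
    next
      case F2: False
      obtain j where jl: "is_lub k X p q j" using lub_exists[OF fin assms(2-4)] by blast
      then have jj: "gjoin k X p q = j" by (rule lubu)
      have pj: "gle k X p j" and qj: "gle k X q j" and jmin: "\<And>u. gle k X p u \<Longrightarrow> gle k X q u \<Longrightarrow> gle k X j u"
        using jl unfolding is_lub_def by auto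
      have jG: "j \<in> Gamma k X" using pj GG by blast
      have sameT: "u = j" if "gle k X u j" "fst u = fst j" for u
      proof -
        have uG: "u \<in> Gamma k X" using GG that(1) by blast
        have "gle k X j u" using chain[OF that(1) refl[OF uG]] that(2) by simp
        then show ?thesis using anti that(1) by blast
      qed
      have tp: "fst p < fst j"
      proof -
        have "fst p \<le> fst j" using pj unfolding gle_def by simp
        moreover have "fst p \<noteq> fst j" using sameT[OF pj] qj F2 by auto
        ultimately show ?thesis by simp
      qed
      have tq: "fst q < fst j"
      proof -
        have "fst q \<le> fst j" using qj unfolding gle_def by simp
        moreover have "fst q \<noteq> fst j" using sameT[OF qj] pj F1 by auto
        ultimately show ?thesis by simp
      qed
      have jbr: "branch_point k X j"
        unfolding branch_point_def
      proof (intro conjI disjI1 jG)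
        show "\<exists>s0<fst j. \<forall>s. s0 \<le> s \<and> s < fst j \<longrightarrow> (\<exists>C0 C1. C0 \<noteq> C1 \<and> gle k X (s, C0) j \<and> gle k X (s, C1) j)"
        proof (rule exI[of _ "max (fst p) (fst q)"], intro conjI allI impI)
          show "max (fst p) (fst q) < fst j" using tp tq by simp
          fix s assume s: "max (fst p) (fst q) \<le> s \<and> s < fst j"
          obtain C0 where c0: "gle k X p (s,C0)" using gle_up[OF fin assms(3)] s by auto
          obtain C1 where c1: "gle k X q (s,C1)" using gle_up[OF fin assms(4)] s by auto
          have 1: "gle k X (s,C0) j" using chain[OF c0 pj] s by simp
          have 2: "gle k X (s,C1) j" using chain[OF c1 qj] s by simp
          have "C0 \<noteq> C1"
          proof
            assume "C0 = C1"
            then have "gle k X j (s,C0)" using jmin c0 c1 by simp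
            then show False using s unfolding gle_def by simp
          qed
          then show "\<exists>C0 C1. C0 \<noteq> C1 \<and> gle k X (s, C0) j \<and> gle k X (s, C1) j" using 1 2 by blast
        qed
      qed
      obtain c where cl: "is_lub k X b1 b2 c" using lub_exists[OF fin assms(2) G] by blast
      then have cc: "gjoin k X b1 b2 = c" by (rule lubu)
      have b1c: "gle k X b1 c" and b2c: "gle k X b2 c"
        and cmin: "\<And>u. gle k X b1 u \<Longrightarrow> gle k X b2 u \<Longrightarrow> gle k X c u"
        using cl unfolding is_lub_def by auto
      have cj: "gle k X c j" using cmin trans[OF b1(2) pj] trans[OF b2(2) qj] by blast
      have cmp: "gle k X u v \<or> gle k X v u" if "gle k X a u" "gle k X a v" for a u v
        using chain[OF that] chain[OF that(2,1)] by linarith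
      have pc: "gle k X p c"
      proof (rule ccontr)
        assume n: "\<not> gle k X p c"
        then have cp: "gle k X c p" using cmp[OF b1(2) b1c] by blast
        show False
        proof (cases "gle k X q c")
          case True then show False using trans[OF True cp] F2 by blast
        next
          case False
          then have "gle k X c q" using cmp[OF b2(2) b2c] by blast
          then show False using cmp[OF cp] F1 F2 by blast
        qed
      qed
      have qc: "gle k X q c"
      proof (rule ccontr)
        assume n: "\<not> gle k X q c"
        then have cq: "gle k X c q" using cmp[OF b2(2) b2c] by blast
        then show False using trans[OF pc cq] F1 by blast
      qed
      have "c = j" using anti[OF cj jmin[OF pc qc]] .
      then show ?thesis unfolding max_branch_below_def using cc jj jbr refl[OF jG] by simp
    qed
  qed
qed

end
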